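(* Let $\mathcal{E}'$ be any function mapping a pair consisting of an $\mathcal{ALC}$-formula and an interpretation to an $\mathcal{ALC}$-formula. Then $\mathcal{E}'(\varphi,M)\equiv\mathcal{E}(\varphi,M)$ for every $\mathcal{ALC}$-formula $\varphi$ and every interpretation $M$ (with $\mathcal{E}$ the finite base model expansion defined in the context) if and only if $\mathcal{E}'$ satisfies, for every $\varphi$ and $M$: (success) $M\in\mathrm{Mod}(\mathcal{E}'(\varphi,M))$; (persistence) $\mathrm{Mod}(\varphi)\subseteq\mathrm{Mod}(\mathcal{E}'(\varphi,M))$; (atomic temperance) for every set $\mathbb{M}'$ of interpretations, if $\mathrm{Mod}(\varphi)\cup[M]_\varphi\subseteq\mathbb{M}'\subsetneq\mathrm{Mod}(\mathcal{E}'(\varphi,M))\cup\{M\}$, then $\mathbb{M}'$ is not finitely representable in $\mathcal{ALC}$-formula; (atomic extensionality) for every interpretation $M'$, if $M'\equiv_\varphi M$ then $\mathrm{Mod}(\mathcal{E}'(\varphi,M))=\mathrm{Mod}(\mathcal{E}'(\varphi,M'))$.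
   Context: Syntax: $N_C,N_R,N_I$ are pairwise disjoint countably infinite sets of concept, role and individual names. $\mathcal{ALC}$ concepts: $C::=A\mid \neg C\mid (C\sqcap C)\mid \exists r.C$; $\top,\sqcup$ usual abbreviations. $\mathcal{ALC}$-formulae: $\phi::=\alpha\mid\neg\phi\mid(\phi\wedge\phi)$ with atomic $\alpha::=C(a)\mid r(a,b)\mid(C=\top)$; $\vee$ is the usual abbreviation; $\neg\neg\psi$ is identified with $\psi$. A literal is an atomic formula or its negation. Interpretations $I=(\Delta^I,\cdot^I)$ (countable nonempty domain, interpreting concept, role and individual names) with the standard semantics; $I\models C(a)$ iff $a^I\in C^I$, $I\models r(a,b)$ iff $(a^I,b^I)\in r^I$, $I\models(C=\top)$ iff $C^I=\Delta^I$, $\neg,\wedge$ classical. $\mathrm{Mod}(\varphi)$ is the set of interpretations satisfying $\varphi$; $\varphi\equiv\psi$ iff $\mathrm{Mod}(\varphi)=\mathrm{Mod}(\psi)$. A set of interpretations is finitely representable in $\mathcal{ALC}$-formula if it equals $\mathrm{Mod}$ of a finite set of $\mathcal{ALC}$-formulae. $\mathrm{Sub}(\alpha)=\mathrm{Sub}(\neg\alpha)=\{\alpha,\neg\alpha\}$ for atomic $\alpha$; $\mathrm{Sub}(\psi\wedge\psi')=\mathrm{Sub}(\neg(\psi\wedge\psi'))=\{\psi\wedge\psi',\neg(\psi\wedge\psi')\}\cup\mathrm{Sub}(\psi)\cup\mathrm{Sub}(\psi')$. $\mathrm{con}(\varphi)$ is the smallest concept set containing $C$ whenever $(C=\top)$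 or $C(a)$ is in $\mathrm{Sub}(\varphi)$, closed under taking conjuncts of $C\sqcap D$, under $\exists r.C\mapsto C$, and under single negation. For an interpretation $I$, $\mathrm{qm}(\varphi,I)=(T,o,f)$ where $T=\{c(x)\mid x\in\Delta^I\}$, $c(x)=\{C\in\mathrm{con}(\varphi)\mid x\in C^I\}$, $o(a)=c(a^I)$ for individuals $a$ of $\varphi$, and $f=\{\psi\in\mathrm{Sub}(\varphi)\mid I\models\psi\}$; $\mathrm{lit}(f)$ is the set of literals in $f$. The finite base model expansion is $\mathcal{E}(\varphi,M)=\varphi$ if $M\models\varphi$, and $\mathcal{E}(\varphi,M)=\varphi\vee\bigwedge\mathrm{lit}(f)$ otherwise, where $\mathrm{qm}(\neg\varphi,M)=(T,o,f)$. $\mathcal{L}_{lit}(\varphi)$ is the set of Boolean combinations of atomic formulae occurring in $\varphi$; $M\equiv_\varphi M'$ iff $M$ and $M'$ satisfy the same formulae of $\mathcal{L}_{lit}(\varphi)$; $[M]_\varphi=\{M'\mid M'\equiv_\varphi M\}$. *)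

theory Defs
  imports Main
begin

text \<open>Concept, role and individual names: three disjoint countably infinite sets,
  each represented by nat (disjointness is by typing).\<close>

datatype concept =
    CName nat
  | CNeg concept
  | CAnd concept concept
  | CEx nat concept

datatype atom =
    CAssert concept nat        (* C(a) *)
  | RAssert nat nat nat        (* r(a,b) *)
  | TBox concept               (* C = top *)

datatype formula =
    FAtom atom
  | FNeg formula
  | FAnd formula formula

definition FOr :: "formula \<Rightarrow> formula \<Rightarrow> formula" where
  "FOr p q = FNeg (FAnd (FNeg p) (FNeg q))"

text \<open>Interpretations: countable nonempty domain, represented as a nonempty subset of nat.\<close>

record interp =
  dom :: "nat set"
  cI  :: "nat \<Rightarrow> nat set"
  rI  :: "nat \<Rightarrow> (nat \<times> nat) set"
  iI  :: "nat \<Rightarrow> nat"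

definition Interps :: "interp set" where
  "Interps = {I. dom I \<noteq> {} \<and> (\<forall>A. cI I A \<subseteq> dom I) \<and> (\<forall>r. rI I r \<subseteq> dom I \<times> dom I)
               \<and> (\<forall>a. iI I a \<in> dom I)}"

fun ext :: "interp \<Rightarrow> concept \<Rightarrow> nat set" where
  "ext I (CName A) = cI I A"
| "ext I (CNeg C) = dom I - ext I C"
| "ext I (CAnd C D) = ext I C \<inter> ext I D"
| "ext I (CEx r C) = {x \<in> dom I. \<exists>y. (x, y) \<in> rI I r \<and> y \<in> ext I C}"

fun sat_atom :: "interp \<Rightarrow> atom \<Rightarrow> bool" where
  "sat_atom I (CAssert C a) = (iI I a \<in> ext I C)"
| "sat_atom I (RAssert r a b) = ((iI I a, iI I b) \<in> rI I r)"
| "sat_atom I (TBox C) = (ext I C = dom I)"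

fun sat :: "interp \<Rightarrow> formula \<Rightarrow> bool" where
  "sat I (FAtom \<alpha>) = sat_atom I \<alpha>"
| "sat I (FNeg p) = (\<not> sat I p)"
| "sat I (FAnd p q) = (sat I p \<and> sat I q)"

definition Mod :: "formula \<Rightarrow> interp set" where
  "Mod p = {I \<in> Interps. sat I p}"

definition fequiv :: "formula \<Rightarrow> formula \<Rightarrow> bool" where
  "fequiv p q \<longleftrightarrow> Mod p = Mod q"

definition ModS :: "formula set \<Rightarrow> interp set" where
  "ModS S = {I \<in> Interps. \<forall>p\<in>S. sat I p}"

definition finrep :: "interp set \<Rightarrow> bool" where
  "finrep MM \<longleftrightarrow> (\<exists>S. finite S \<and> MM = ModS S)"

text \<open>Sub; the identification of double negation is reflected by Sub (FNeg p) = Sub p.\<close>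

fun Sub :: "formula \<Rightarrow> formula set" where
  "Sub (FAtom \<alpha>) = {FAtom \<alpha>, FNeg (FAtom \<alpha>)}"
| "Sub (FAnd p q) = {FAnd p q, FNeg (FAnd p q)} \<union> Sub p \<union> Sub q"
| "Sub (FNeg p) = Sub p"

fun cneg :: "concept \<Rightarrow> concept" where
  "cneg (CNeg C) = C"
| "cneg C = CNeg C"

inductive_set con :: "formula \<Rightarrow> concept set" for \<phi> :: formula where
  con_tbox: "FAtom (TBox C) \<in> Sub \<phi> \<Longrightarrow> C \<in> con \<phi>"
| con_assert: "FAtom (CAssert C a) \<in> Sub \<phi> \<Longrightarrow> C \<in> con \<phi>"
| con_and1: "CAnd C D \<in> con \<phi> \<Longrightarrow> C \<in> con \<phi>"
| con_and2: "CAnd C D \<in> con \<phi> \<Longrightarrow> D \<in> con \<phi>"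
| con_ex: "CEx r C \<in> con \<phi> \<Longrightarrow> C \<in> con \<phi>"
| con_neg: "C \<in> con \<phi> \<Longrightarrow> cneg C \<in> con \<phi>"

fun inds_atom :: "atom \<Rightarrow> nat set" where
  "inds_atom (CAssert C a) = {a}"
| "inds_atom (RAssert r a b) = {a, b}"
| "inds_atom (TBox C) = {}"

fun inds :: "formula \<Rightarrow> nat set" where
  "inds (FAtom \<alpha>) = inds_atom \<alpha>"
| "inds (FNeg p) = inds p"
| "inds (FAnd p q) = inds p \<union> inds q"

definition ctype :: "formula \<Rightarrow> interp \<Rightarrow> nat \<Rightarrow> concept set" where
  "ctype \<phi> I x = {C \<in> con \<phi>. x \<in> ext I C}"

definition qm :: "formula \<Rightarrow> interp \<Rightarrow> concept set set \<times> (nat \<Rightarrow> concept set option) \<times> formula set" where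
  "qm \<phi> I = ({ctype \<phi> I x | x. x \<in> dom I},
             (\<lambda>a. if a \<in> inds \<phi> then Some (ctype \<phi> I (iI I a)) else None),
             {\<psi> \<in> Sub \<phi>. sat I \<psi>})"

fun is_literal :: "formula \<Rightarrow> bool" where
  "is_literal (FAtom \<alpha>) = True"
| "is_literal (FNeg (FAtom \<alpha>)) = True"
| "is_literal _ = False"

definition lit :: "formula set \<Rightarrow> formula set" where
  "lit f = {\<psi> \<in> f. is_literal \<psi>}"

definition ftrue :: formula where
  "ftrue = FAtom (TBox (CNeg (CAnd (CName 0) (CNeg (CName 0)))))"

fun conj_list :: "formula list \<Rightarrow> formula" where
  "conj_list [] = ftrue"
| "conj_list [p] = p"
| "conj_list (p # ps) = FAnd p (conj_list ps)"

text \<open>Conjunction of a finite set of formulae (some enumeration; unique up to equivalence).\<close>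
definition BigAnd :: "formula set \<Rightarrow> formula" where
  "BigAnd S = conj_list (SOME xs. set xs = S)"

definition E :: "formula \<Rightarrow> interp \<Rightarrow> formula" where
  "E \<phi> M = (if sat M \<phi> then \<phi>
            else FOr \<phi> (BigAnd (lit (snd (snd (qm (FNeg \<phi>) M))))))"

fun atoms :: "formula \<Rightarrow> atom set" where
  "atoms (FAtom \<alpha>) = {\<alpha>}"
| "atoms (FNeg p) = atoms p"
| "atoms (FAnd p q) = atoms p \<union> atoms q"

inductive_set Llit :: "formula \<Rightarrow> formula set" for \<phi> :: formula where
  Llit_atom: "\<alpha> \<in> atoms \<phi> \<Longrightarrow> FAtom \<alpha> \<in> Llit \<phi>"
| Llit_neg: "p \<in> Llit \<phi> \<Longrightarrow> FNeg p \<in> Llit \<phi>"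
| Llit_and: "p \<in> Llit \<phi> \<Longrightarrow> q \<in> Llit \<phi> \<Longrightarrow> FAnd p q \<in> Llit \<phi>"

definition equiv_phi :: "formula \<Rightarrow> interp \<Rightarrow> interp \<Rightarrow> bool" where
  "equiv_phi \<phi> M M' \<longleftrightarrow> (\<forall>\<psi> \<in> Llit \<phi>. sat M \<psi> \<longleftrightarrow> sat M' \<psi>)"

definition eqclass :: "formula \<Rightarrow> interp \<Rightarrow> interp set" where
  "eqclass \<phi> M = {M' \<in> Interps. equiv_phi \<phi> M' M}"

end

theory Submission
  imports Defs
begin

definition agree :: "formula \<Rightarrow> interp \<Rightarrow> interp \<Rightarrow> bool" where
  "agree \<phi> I J \<longleftrightarrow> (\<forall>\<alpha>\<in>atoms \<phi>. sat_atom I \<alpha> = sat_atom J \<alpha>)"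

lemma agree_sat: "(\<forall>\<alpha>\<in>atoms p. sat_atom I \<alpha> = sat_atom J \<alpha>) \<Longrightarrow> sat I p = sat J p"
  by (induction p) auto

lemma Llit_atoms: "p \<in> Llit \<phi> \<Longrightarrow> atoms p \<subseteq> atoms \<phi>"
  by (induction rule: Llit.induct) auto

lemma equiv_phi_agree: "equiv_phi \<phi> I J \<longleftrightarrow> agree \<phi> I J"
  unfolding equiv_phi_def agree_def
proof
  assume "\<forall>\<psi>\<in>Llit \<phi>. sat I \<psi> = sat J \<psi>"
  then show "\<forall>\<alpha>\<in>atoms \<phi>. sat_atom I \<alpha> = sat_atom J \<alpha>"
    using Llit_atom by fastforce
next
  assume a: "\<forall>\<alpha>\<in>atoms \<phi>. sat_atom I \<alpha> = sat_atom J \<alpha>"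
  show "\<forall>\<psi>\<in>Llit \<phi>. sat I \<psi> = sat J \<psi>"
  proof
    fix \<psi> assume "\<psi> \<in> Llit \<phi>"
    then have "atoms \<psi> \<subseteq> atoms \<phi>" by (rule Llit_atoms)
    then show "sat I \<psi> = sat J \<psi>" using a agree_sat by (meson subsetD)
  qed
qed

lemma sat_ftrue: "sat I ftrue"
  unfolding ftrue_def by auto

lemma sat_conj_list: "sat I (conj_list xs) = (\<forall>p\<in>set xs. sat I p)"
  by (induction xs rule: conj_list.induct) (auto simp: sat_ftrue)

lemma sat_BigAnd: "finite S \<Longrightarrow> sat I (BigAnd S) = (\<forall>p\<in>S. sat I p)"
  unfolding BigAnd_def
proof -
  assume "finite S"
  then have "\<exists>xs. set xs = S" by (rule finite_list)
  then have "set (SOME xs. set xs = S) = S" by (rule someI_ex)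
  then show "sat I (conj_list (SOME xs. set xs = S)) = (\<forall>p\<in>S. sat I p)"
    by (simp add: sat_conj_list)
qed

lemma finite_Sub: "finite (Sub p)"
  by (induction p) auto

lemma Sub_atom: "FAtom \<alpha> \<in> Sub p \<longleftrightarrow> \<alpha> \<in> atoms p"
  by (induction p) auto

lemma Sub_negatom: "FNeg (FAtom \<alpha>) \<in> Sub p \<longleftrightarrow> \<alpha> \<in> atoms p"
  by (induction p) auto

lemma is_literal_cases: "is_literal \<psi> \<Longrightarrow> (\<exists>\<alpha>. \<psi> = FAtom \<alpha> \<or> \<psi> = FNeg (FAtom \<alpha>))"
  by (induction \<psi> rule: is_literal.induct) auto

lemma sat_lit: "sat I (BigAnd (lit (snd (snd (qm (FNeg \<phi>) M))))) \<longleftrightarrow> agree \<phi> I M"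
proof -
  have eq: "lit (snd (snd (qm (FNeg \<phi>) M))) = {\<psi> \<in> Sub \<phi>. sat M \<psi> \<and> is_literal \<psi>}"
    unfolding lit_def qm_def by auto
  have fin: "finite {\<psi> \<in> Sub \<phi>. sat M \<psi> \<and> is_literal \<psi>}" using finite_Sub by auto
  have "(\<forall>p\<in>{\<psi> \<in> Sub \<phi>. sat M \<psi> \<and> is_literal \<psi>}. sat I p) \<longleftrightarrow> agree \<phi> I M"
  proof
    assume a: "\<forall>p\<in>{\<psi> \<in> Sub \<phi>. sat M \<psi> \<and> is_literal \<psi>}. sat I p"
    show "agree \<phi> I M" unfolding agree_def
    proof
      fix \<alpha> assume h: "\<alpha> \<in> atoms \<phi>"
      show "sat_atom I \<alpha> = sat_atom M \<alpha>"
      proof (cases "sat_atom M \<alpha>")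
        case True
        then show ?thesis using a h Sub_atom[of \<alpha> \<phi>] by fastforce
      next
        case False
        then show ?thesis using a h Sub_negatom[of \<alpha> \<phi>] by fastforce
      qed
    qed
  next
    assume a: "agree \<phi> I M"
    show "\<forall>p\<in>{\<psi> \<in> Sub \<phi>. sat M \<psi> \<and> is_literal \<psi>}. sat I p"
    proof
      fix p assume p: "p \<in> {\<psi> \<in> Sub \<phi>. sat M \<psi> \<and> is_literal \<psi>}"
      then obtain \<alpha> where "p = FAtom \<alpha> \<or> p = FNeg (FAtom \<alpha>)"
        using is_literal_cases by blast
      then show "sat I p" using p a Sub_atom[of \<alpha> \<phi>] Sub_negatom[of \<alpha> \<phi>]
        unfolding agree_def by auto
    qed
  qed
  then show ?thesis using eq fin sat_BigAnd by simp
qed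

lemma Mod_E: "Mod (E \<phi> M) = Mod \<phi> \<union> eqclass \<phi> M"
proof (cases "sat M \<phi>")
  case True
  have "eqclass \<phi> M \<subseteq> Mod \<phi>"
  proof
    fix I assume "I \<in> eqclass \<phi> M"
    then have "I \<in> Interps" "agree \<phi> I M" unfolding eqclass_def by (auto simp: equiv_phi_agree)
    then show "I \<in> Mod \<phi>" using True agree_sat[of \<phi> I M] unfolding agree_def Mod_def by auto
  qed
  then show ?thesis using True unfolding E_def by auto
next
  case False
  then show ?thesis unfolding E_def Mod_def eqclass_def
    by (auto simp: FOr_def sat_lit equiv_phi_agree)
qed

lemma finrep_Mod: "finrep (Mod p)"
  unfolding finrep_def ModS_def Mod_def by (rule exI[of _ "{p}"]) auto

theorem mainTheorem2:
  fixes E' :: "formula \<Rightarrow> interp \<Rightarrow> formula"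
  shows "(\<forall>\<phi>. \<forall>M \<in> Interps. fequiv (E' \<phi> M) (E \<phi> M)) \<longleftrightarrow>
         (\<forall>\<phi>. \<forall>M \<in> Interps.
            M \<in> Mod (E' \<phi> M)
          \<and> Mod \<phi> \<subseteq> Mod (E' \<phi> M)
          \<and> (\<forall>MM. Mod \<phi> \<union> eqclass \<phi> M \<subseteq> MM \<and> MM \<subset> Mod (E' \<phi> M) \<union> {M} \<longrightarrow> \<not> finrep MM)
          \<and> (\<forall>M' \<in> Interps. equiv_phi \<phi> M' M \<longrightarrow> Mod (E' \<phi> M) = Mod (E' \<phi> M')))"
proof
  assume L: "\<forall>\<phi>. \<forall>M \<in> Interps. fequiv (E' \<phi> M) (E \<phi> M)"
  show "\<forall>\<phi>. \<forall>M \<in> Interps.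
            M \<in> Mod (E' \<phi> M)
          \<and> Mod \<phi> \<subseteq> Mod (E' \<phi> M)
          \<and> (\<forall>MM. Mod \<phi> \<union> eqclass \<phi> M \<subseteq> MM \<and> MM \<subset> Mod (E' \<phi> M) \<union> {M} \<longrightarrow> \<not> finrep MM)
          \<and> (\<forall>M' \<in> Interps. equiv_phi \<phi> M' M \<longrightarrow> Mod (E' \<phi> M) = Mod (E' \<phi> M'))"
  proof (intro allI ballI conjI impI)
    fix \<phi> M assume M: "M \<in> Interps"
    have X: "Mod (E' \<phi> M) = Mod \<phi> \<union> eqclass \<phi> M"
      using L M Mod_E unfolding fequiv_def by auto
    have Mc: "M \<in> eqclass \<phi> M" using M unfolding eqclass_def equiv_phi_def by auto
    show "M \<in> Mod (E' \<phi> M)" using X Mc by auto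
    show "Mod \<phi> \<subseteq> Mod (E' \<phi> M)" using X by auto
    fix MM assume "Mod \<phi> \<union> eqclass \<phi> M \<subseteq> MM \<and> MM \<subset> Mod (E' \<phi> M) \<union> {M}"
    then show "\<not> finrep MM" using X Mc by auto
  next
    fix \<phi> M M' assume M: "M \<in> Interps" and M': "M' \<in> Interps" and e: "equiv_phi \<phi> M' M"
    have X: "Mod (E' \<phi> M) = Mod \<phi> \<union> eqclass \<phi> M"
      using L M Mod_E unfolding fequiv_def by auto
    have X': "Mod (E' \<phi> M') = Mod \<phi> \<union> eqclass \<phi> M'"
      using L M' Mod_E unfolding fequiv_def by auto
    have "eqclass \<phi> M = eqclass \<phi> M'"
      using e unfolding eqclass_def equiv_phi_def by auto
    then show "Mod (E' \<phi> M) = Mod (E' \<phi> M')" using X X' by simp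
  qed
next
  assume R: "\<forall>\<phi>. \<forall>M \<in> Interps.
            M \<in> Mod (E' \<phi> M)
          \<and> Mod \<phi> \<subseteq> Mod (E' \<phi> M)
          \<and> (\<forall>MM. Mod \<phi> \<union> eqclass \<phi> M \<subseteq> MM \<and> MM \<subset> Mod (E' \<phi> M) \<union> {M} \<longrightarrow> \<not> finrep MM)
          \<and> (\<forall>M' \<in> Interps. equiv_phi \<phi> M' M \<longrightarrow> Mod (E' \<phi> M) = Mod (E' \<phi> M'))"
  show "\<forall>\<phi>. \<forall>M \<in> Interps. fequiv (E' \<phi> M) (E \<phi> M)"
  proof (intro allI ballI)
    fix \<phi> M assume M: "M \<in> Interps"
    have s: "M \<in> Mod (E' \<phi> M)" and p: "Mod \<phi> \<subseteq> Mod (E' \<phi> M)"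
      and t: "\<forall>MM. Mod \<phi> \<union> eqclass \<phi> M \<subseteq> MM \<and> MM \<subset> Mod (E' \<phi> M) \<union> {M} \<longrightarrow> \<not> finrep MM"
      and x: "\<forall>M' \<in> Interps. equiv_phi \<phi> M' M \<longrightarrow> Mod (E' \<phi> M) = Mod (E' \<phi> M')"
      using R M by auto
    have sub: "eqclass \<phi> M \<subseteq> Mod (E' \<phi> M)"
    proof
      fix M' assume "M' \<in> eqclass \<phi> M"
      then have M': "M' \<in> Interps" "equiv_phi \<phi> M' M" unfolding eqclass_def by auto
      then have "Mod (E' \<phi> M) = Mod (E' \<phi> M')" using x by auto
      moreover have "M' \<in> Mod (E' \<phi> M')" using R M' by auto
      ultimately show "M' \<in> Mod (E' \<phi> M)" by simp
    qed
    have "Mod (E' \<phi> M) = Mod \<phi> \<union> eqclass \<phi> M"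
    proof (rule ccontr)
      assume ne: "Mod (E' \<phi> M) \<noteq> Mod \<phi> \<union> eqclass \<phi> M"
      have "Mod \<phi> \<union> eqclass \<phi> M \<subset> Mod (E' \<phi> M) \<union> {M}"
        using ne sub p s by auto
      then have "\<not> finrep (Mod \<phi> \<union> eqclass \<phi> M)" using t by auto
      then show False using finrep_Mod[of "E \<phi> M"] Mod_E by simp
    qed
    then show "fequiv (E' \<phi> M) (E \<phi> M)" unfolding fequiv_def using Mod_E by simp
  qed
qed

end
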